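(* Let $\mathcal{U}_s=\{{\bf U}\in\mathbb{C}^{n\times n}:{\bf U}{\bf U}^H={\bf I}_n,\ {\bf U}={\bf U}^T\}$. For a complex symmetric matrix ${\bf A}={\bf A}^T\in\mathbb{C}^{n\times n}$ with Takagi factorization ${\bf A}={\bf Q}\boldsymbol{\Sigma}{\bf Q}^T$, define $\Pi({\bf A})={\bf Q}{\bf Q}^T$. Then $\Pi({\bf A})\in\mathcal{U}_s$ and $\Pi({\bf A})$ is a unitary symmetric matrix closest to ${\bf A}$ in Frobenius norm, i.e. $\|{\bf A}-\Pi({\bf A})\|_F=\min_{{\bf U}\in\mathcal{U}_s}\|{\bf A}-{\bf U}\|_F$ (if there are several minimizers, $\Pi({\bf A})$ is one of them).
   Context: Takagi factorization: every complex symmetric ${\bf A}={\bf A}^T\in\mathbb{C}^{n\times n}$ can be written as ${\bf A}={\bf Q}\boldsymbol{\Sigma}{\bf Q}^T$ where ${\bf Q}$ is an $n\times n$ unitary matrix and $\boldsymbol{\Sigma}=\operatorname{diag}(\sigma_1,\ldots,\sigma_n)$ with $\sigma_1\ge\cdots\ge\sigma_n\ge 0$. $\|\cdot\|_F$ is the Frobenius norm. *)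

theory Defs
  imports Complex_Main "Jordan_Normal_Form.Matrix"
begin

definition conj_transpose :: "complex mat \<Rightarrow> complex mat" where
  "conj_transpose A = transpose_mat (map_mat cnj A)"

definition unitary_mat :: "nat \<Rightarrow> complex mat \<Rightarrow> bool" where
  "unitary_mat n U \<longleftrightarrow> U \<in> carrier_mat n n \<and> U * conj_transpose U = 1\<^sub>m n"

definition unitary_symmetric :: "nat \<Rightarrow> complex mat set" where
  "unitary_symmetric n =
     {U. U \<in> carrier_mat n n \<and> U * conj_transpose U = 1\<^sub>m n \<and> U = transpose_mat U}"

definition frob_norm :: "complex mat \<Rightarrow> real" where
  "frob_norm A = sqrt (\<Sum>i<dim_row A. \<Sum>j<dim_col A. (cmod (A $$ (i, j)))\<^sup>2)"

definition diag_real :: "nat \<Rightarrow> (nat \<Rightarrow> real) \<Rightarrow> complex mat" where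
  "diag_real n \<sigma> = mat n n (\<lambda>(i, j). if i = j then complex_of_real (\<sigma> i) else 0)"

definition takagi_factorization :: "nat \<Rightarrow> complex mat \<Rightarrow> complex mat \<Rightarrow> (nat \<Rightarrow> real) \<Rightarrow> bool" where
  "takagi_factorization n A Q \<sigma> \<longleftrightarrow>
     unitary_mat n Q \<and>
     (\<forall>i<n. 0 \<le> \<sigma> i) \<and> (\<forall>i j. i \<le> j \<and> j < n \<longrightarrow> \<sigma> j \<le> \<sigma> i) \<and>
     A = Q * diag_real n \<sigma> * transpose_mat Q"

end

theory Submission
  imports Defs "Jordan_Normal_Form.Determinant"
begin

abbreviation ct where "ct \<equiv> conj_transpose"
definition tr :: "complex mat \<Rightarrow> complex" where "tr M = (\<Sum>i<dim_row M. M $$ (i,i))"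

lemma ct_carrier[simp]: "A \<in> carrier_mat m n \<Longrightarrow> ct A \<in> carrier_mat n m"
  by (auto simp: conj_transpose_def)
lemma ct_dims[simp]: "dim_row (ct A) = dim_col A" "dim_col (ct A) = dim_row A"
  by (auto simp: conj_transpose_def)
lemma ct_index[simp]: "i < dim_col A \<Longrightarrow> j < dim_row A \<Longrightarrow> ct A $$ (i,j) = cnj (A $$ (j,i))"
  by (auto simp: conj_transpose_def)

lemma ct_mult: assumes "A \<in> carrier_mat m k" "B \<in> carrier_mat k n"
  shows "ct (A * B) = ct B * ct A"
  using assms by (intro eq_matI) (auto simp: scalar_prod_def cnj_sum mult.commute)

lemma ct_ct[simp]: "ct (ct A) = A"
  by (intro eq_matI) auto

lemma ct_transpose: "ct (transpose_mat A) = map_mat cnj A"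
  by (intro eq_matI) (auto simp: conj_transpose_def)

lemma cnj_mult: assumes "A \<in> carrier_mat m k" "B \<in> carrier_mat k n"
  shows "map_mat cnj (A * B) = map_mat cnj A * map_mat cnj B"
  using assms by (intro eq_matI) (auto simp: scalar_prod_def cnj_sum)

lemma cnj_one[simp]: "map_mat cnj (1\<^sub>m n) = 1\<^sub>m n"
  by (intro eq_matI) auto

lemma cnj_ct: "map_mat cnj (ct A) = transpose_mat A"
  by (intro eq_matI) (auto simp: conj_transpose_def)

lemma tr_comm: assumes "A \<in> carrier_mat n m" "B \<in> carrier_mat m n"
  shows "tr (A * B) = tr (B * A)"
proof -
  have "tr (A * B) = (\<Sum>i<n. \<Sum>j<m. A $$ (i,j) * B $$ (j,i))"
    using assms by (auto simp: tr_def scalar_prod_def atLeast0LessThan intro!: sum.cong)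
  also have "\<dots> = (\<Sum>j<m. \<Sum>i<n. B $$ (j,i) * A $$ (i,j))"
    by (subst sum.swap) (simp add: mult.commute)
  also have "\<dots> = tr (B * A)"
    using assms by (auto simp: tr_def scalar_prod_def atLeast0LessThan intro!: sum.cong)
  finally show ?thesis .
qed

lemma tr_diag: assumes "W \<in> carrier_mat n n"
  shows "tr (diag_real n \<sigma> * W) = (\<Sum>k<n. of_real (\<sigma> k) * W $$ (k,k))"
proof -
  have "\<And>k. k < n \<Longrightarrow> (\<Sum>i<n. (if k = i then of_real (\<sigma> k) else 0) * W $$ (i,k)) = of_real (\<sigma> k) * W $$ (k,k)"
  proof -
    fix k assume "k < n"
    have "(\<Sum>i<n. (if k = i then of_real (\<sigma> k) else 0) * W $$ (i,k)) = (\<Sum>i<n. if k = i then of_real (\<sigma> k) * W $$ (i,k) else 0)"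
      by (intro sum.cong) auto
    then show "?thesis k" using \<open>k < n\<close> by simp
  qed
  then show ?thesis
  using assms by (auto simp: tr_def diag_real_def scalar_prod_def atLeast0LessThan intro!: sum.cong)
qed

lemma tr_one[simp]: "tr (1\<^sub>m n) = of_nat n"
  by (simp add: tr_def)

lemma inner_tr: assumes "A \<in> carrier_mat n n" "U \<in> carrier_mat n n"
  shows "(\<Sum>i<n. \<Sum>j<n. A $$ (i,j) * cnj (U $$ (i,j))) = tr (A * ct U)"
  using assms by (auto simp: tr_def scalar_prod_def atLeast0LessThan intro!: sum.cong)

lemma cmod_diff_sq: "(cmod (a - b))\<^sup>2 = (cmod a)\<^sup>2 + (cmod b)\<^sup>2 - 2 * Re (a * cnj b)"
  by (simp add: cmod_power2 power2_diff algebra_simps)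


lemma sq_mult: "A \<in> carrier_mat n n \<Longrightarrow> B \<in> carrier_mat n n \<Longrightarrow> A * B \<in> carrier_mat n n"
  by auto

lemma unit_diag_le1: assumes W: "W \<in> carrier_mat n n" and WW: "W * ct W = 1\<^sub>m n" and k: "k < n"
  shows "cmod (W $$ (k,k)) \<le> 1"
proof -
  have "(W * ct W) $$ (k,k) = (\<Sum>j<n. W $$ (k,j) * cnj (W $$ (k,j)))"
    using W k by (auto simp: scalar_prod_def atLeast0LessThan intro!: sum.cong)
  also have "\<dots> = of_real (\<Sum>j<n. (cmod (W $$ (k,j)))\<^sup>2)"
    unfolding of_real_sum complex_norm_square by simp
  finally have "(\<Sum>j<n. (cmod (W $$ (k,j)))\<^sup>2) = 1"
    using WW k by (metis index_one_mat(1) of_real_eq_1_iff)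
  moreover have "(cmod (W $$ (k,k)))\<^sup>2 \<le> (\<Sum>j<n. (cmod (W $$ (k,j)))\<^sup>2)"
    using k by (intro member_le_sum) auto
  ultimately have "(cmod (W $$ (k,k)))\<^sup>2 \<le> 1" by simp
  then show ?thesis by (simp add: power_le_one_iff abs_le_square_iff)
qed

lemma frob_expand: assumes A: "A \<in> carrier_mat n n" and U: "U \<in> carrier_mat n n"
  and UU: "U * ct U = 1\<^sub>m n"
  shows "(frob_norm (A - U))\<^sup>2 = (\<Sum>i<n. \<Sum>j<n. (cmod (A $$ (i,j)))\<^sup>2) + real n - 2 * Re (tr (A * ct U))"
proof -
  have "(frob_norm (A - U))\<^sup>2 = (\<Sum>i<n. \<Sum>j<n. (cmod ((A - U) $$ (i,j)))\<^sup>2)"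
    unfolding frob_norm_def using A U by (simp add: sum_nonneg)
  also have "\<dots> = (\<Sum>i<n. \<Sum>j<n. (cmod (A $$ (i,j)))\<^sup>2 + (cmod (U $$ (i,j)))\<^sup>2 - 2 * Re (A $$ (i,j) * cnj (U $$ (i,j))))"
    using A U by (auto simp: cmod_diff_sq intro!: sum.cong)
  also have "\<dots> = (\<Sum>i<n. \<Sum>j<n. (cmod (A $$ (i,j)))\<^sup>2) + (\<Sum>i<n. \<Sum>j<n. (cmod (U $$ (i,j)))\<^sup>2)
      - 2 * Re (\<Sum>i<n. \<Sum>j<n. A $$ (i,j) * cnj (U $$ (i,j)))"
    by (simp add: sum.distrib sum_subtractf sum_distrib_left Re_sum)
  also have "(\<Sum>i<n. \<Sum>j<n. (cmod (U $$ (i,j)))\<^sup>2) = Re (\<Sum>i<n. \<Sum>j<n. U $$ (i,j) * cnj (U $$ (i,j)))"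
    by (simp add: Re_sum complex_norm_square[symmetric])
  also have "\<dots> = real n" using inner_tr[OF U U] UU by simp
  also have "(\<Sum>i<n. \<Sum>j<n. A $$ (i,j) * cnj (U $$ (i,j))) = tr (A * ct U)"
    using inner_tr[OF A U] .
  finally show ?thesis .
qed


theorem proposition2:
  fixes n :: nat and A Q :: "complex mat" and \<sigma> :: "nat \<Rightarrow> real"
  assumes "A \<in> carrier_mat n n"
    and "A = transpose_mat A"
    and "takagi_factorization n A Q \<sigma>"
  shows "Q * transpose_mat Q \<in> unitary_symmetric n \<and>
         (\<forall>U \<in> unitary_symmetric n. frob_norm (A - Q * transpose_mat Q) \<le> frob_norm (A - U))"
proof -
  define D where "D = diag_real n \<sigma>"
  have Q: "Q \<in> carrier_mat n n" and QQ: "Q * ct Q = 1\<^sub>m n" and sig: "\<And>i. i < n \<Longrightarrow> 0 \<le> \<sigma> i"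
    and AQ: "A = Q * D * transpose_mat Q"
    using assms(3) by (auto simp: takagi_factorization_def unitary_mat_def D_def)
  have D: "D \<in> carrier_mat n n" by (simp add: D_def diag_real_def)
  have QhQ: "ct Q * Q = 1\<^sub>m n" using mat_mult_left_right_inverse[OF Q _ QQ] Q by simp
  have QtcQ: "transpose_mat Q * map_mat cnj Q = 1\<^sub>m n"
  proof -
    have "transpose_mat Q * map_mat cnj Q = map_mat cnj (ct Q) * map_mat cnj Q" by (simp add: cnj_ct)
    also have "\<dots> = map_mat cnj (ct Q * Q)" using Q by (simp add: cnj_mult[of _ n n _ n])
    finally show ?thesis using QhQ by simp
  qed
  define U0 where "U0 = Q * transpose_mat Q"
  have U0: "U0 \<in> carrier_mat n n" using Q by (simp add: U0_def)
  have ctU0: "ct U0 = map_mat cnj Q * ct Q"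
    using Q by (simp add: U0_def ct_mult[of _ n n] ct_transpose)
  have U0U0: "U0 * ct U0 = 1\<^sub>m n"
  proof -
    have "U0 * ct U0 = U0 * (map_mat cnj Q * ct Q)" by (simp only: ctU0)
    also have "\<dots> = Q * transpose_mat Q * (map_mat cnj Q * ct Q)" by (simp add: U0_def)
    also have "\<dots> = Q * (transpose_mat Q * map_mat cnj Q) * ct Q"
      using Q by (simp add: assoc_mult_mat[of _ n n _ n _ n])
    also have "\<dots> = 1\<^sub>m n" using Q QQ by (simp add: QtcQ)
    finally show ?thesis .
  qed
  have U0s: "U0 \<in> unitary_symmetric n"
    using U0 U0U0 Q by (simp add: unitary_symmetric_def U0_def transpose_mult[of _ n n])
  
  have trW: "tr (A * ct U) = tr (D * (transpose_mat Q * ct U * Q))" if U: "U \<in> carrier_mat n n" for U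
  proof -
    have "A * ct U = Q * (D * transpose_mat Q * ct U)"
      using Q D U by (simp add: AQ assoc_mult_mat[of _ n n _ n _ n])
    then have "tr (A * ct U) = tr ((D * transpose_mat Q * ct U) * Q)"
    proof -
      have "D * transpose_mat Q * ct U \<in> carrier_mat n n" using Q D U
        by (intro mult_carrier_mat[of _ n n]) auto
      then show ?thesis using tr_comm[of Q n n "D * transpose_mat Q * ct U"] Q \<open>A * ct U = _\<close> by simp
    qed
    also have "\<dots> = tr (D * (transpose_mat Q * ct U * Q))"
      using Q D U by (simp add: assoc_mult_mat[of _ n n _ n _ n])
    finally show ?thesis .
  qed
  have bound: "Re (tr (A * ct U)) \<le> (\<Sum>k<n. \<sigma> k)" if U: "U \<in> carrier_mat n n" and UU: "U * ct U = 1\<^sub>m n" for U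
  proof -
    define W where "W = transpose_mat Q * ct U * Q"
    have W: "W \<in> carrier_mat n n" using Q U unfolding W_def by (intro mult_carrier_mat[of _ n n]) auto
    have UhU: "ct U * U = 1\<^sub>m n" using mat_mult_left_right_inverse[OF U _ UU] U by simp
    have ctW: "ct W = ct Q * U * map_mat cnj Q"
    proof -
      have c1: "transpose_mat Q * ct U \<in> carrier_mat n n" using Q U by (intro mult_carrier_mat[of _ n n]) auto
      have "ct W = ct Q * ct (transpose_mat Q * ct U)" unfolding W_def using ct_mult[OF c1 Q] .
      also have "ct (transpose_mat Q * ct U) = U * map_mat cnj Q"
        using ct_mult[of "transpose_mat Q" n n "ct U" n] Q U by (simp add: ct_transpose)
      finally show ?thesis using Q U by (simp add: assoc_mult_mat[of _ n n _ n _ n])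
    qed
    have "W * ct W = W * (ct Q * U * map_mat cnj Q)" by (simp only: ctW)
    also have "\<dots> = transpose_mat Q * (ct U * (Q * ct Q) * U) * map_mat cnj Q"
      using Q U by (simp add: W_def sq_mult assoc_mult_mat[of _ n n _ n _ n])
    also have "\<dots> = 1\<^sub>m n" using Q U by (simp add: QQ UhU QtcQ)
    finally have WW: "W * ct W = 1\<^sub>m n" .
    have "Re (tr (A * ct U)) = (\<Sum>k<n. \<sigma> k * Re (W $$ (k,k)))"
      using trW[OF U] tr_diag[OF W, of \<sigma>] by (simp add: W_def D_def Re_sum)
    also have "\<dots> \<le> (\<Sum>k<n. \<sigma> k)"
    proof (intro sum_mono)
      fix k assume "k \<in> {..<n}"
      then have k: "k < n" by simp
      have "Re (W $$ (k,k)) \<le> 1"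
        using unit_diag_le1[OF W WW k] complex_Re_le_cmod order_trans by blast
      then show "\<sigma> k * Re (W $$ (k,k)) \<le> \<sigma> k"
        using sig[OF k] by (simp add: mult_left_le)
    qed
    finally show ?thesis .
  qed
  have eq: "Re (tr (A * ct U0)) = (\<Sum>k<n. \<sigma> k)"
  proof -
    have "transpose_mat Q * ct U0 * Q = (transpose_mat Q * map_mat cnj Q) * (ct Q * Q)"
      using Q by (simp add: ctU0 sq_mult assoc_mult_mat[of _ n n _ n _ n])
    also have "\<dots> = 1\<^sub>m n" by (simp add: QtcQ QhQ)
    finally have "tr (A * ct U0) = tr (D * 1\<^sub>m n)" using trW[OF U0] by simp
    then show ?thesis using D by (simp add: D_def tr_def diag_real_def Re_sum)
  qed
  have FA: "\<And>U. U \<in> unitary_symmetric n \<Longrightarrow> frob_norm (A - U0) \<le> frob_norm (A - U)"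
  proof -
    fix U assume "U \<in> unitary_symmetric n"
    then have U: "U \<in> carrier_mat n n" and UU: "U * ct U = 1\<^sub>m n" by (auto simp: unitary_symmetric_def)
    have "(frob_norm (A - U0))\<^sup>2 \<le> (frob_norm (A - U))\<^sup>2"
      using frob_expand[OF assms(1) U UU] frob_expand[OF assms(1) U0 U0U0] bound[OF U UU] eq by simp
    moreover have "0 \<le> frob_norm (A - U)" by (simp add: frob_norm_def sum_nonneg)
    ultimately show "frob_norm (A - U0) \<le> frob_norm (A - U)" using power2_le_imp_le by blast
  qed
  show ?thesis using U0s FA by (simp add: U0_def)
qed

end
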